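(* Define $\psi:\mathbb R^5\to\mathbb R$ by \[ \begin{aligned} \psi(w_0,w_1,w_2,w_3,w_4)&=-\tfrac12w_0^2+\tfrac92(w_3^2+w_4^2)+\sqrt6\,w_0(w_3^2+w_4^2)+\tfrac{3\sqrt6}{2}w_4(w_2^2-w_1^2)\\ &\quad-3\sqrt6\,w_1w_2w_3-\tfrac{\sqrt6}{2}w_0(w_1^2+w_2^2)-\tfrac{\sqrt6}{9}w_0^3. \end{aligned} \] Then for all $(w_0,w_1,w_2,w_3,w_4)\in\mathbb R^5$, \[ \psi(w_0,w_1,w_2,w_3,w_4)\ge\psi\left(w_0,\sqrt{w_1^2+w_2^2},0,0,\sqrt{w_3^2+w_4^2}\right). \] *)

theory Defs
  imports Complex_Main
begin

definition psi :: "real \<Rightarrow> real \<Rightarrow> real \<Rightarrow> real \<Rightarrow> real \<Rightarrow> real" where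
  "psi w0 w1 w2 w3 w4 =
     - (1/2) * w0^2 + (9/2) * (w3^2 + w4^2) + sqrt 6 * w0 * (w3^2 + w4^2)
     + (3 * sqrt 6 / 2) * w4 * (w2^2 - w1^2)
     - 3 * sqrt 6 * w1 * w2 * w3
     - (sqrt 6 / 2) * w0 * (w1^2 + w2^2)
     - (sqrt 6 / 9) * w0^3"

end

theory Submission
  imports Defs
begin

lemma key:
  fixes w1 w2 w3 w4 :: real
  shows "w4 * (w2^2 - w1^2) - 2 * w1 * w2 * w3 \<ge> - (sqrt (w3^2 + w4^2) * (w1^2 + w2^2))"
proof -
  define A where "A = w4 * (w2^2 - w1^2) - 2 * w1 * w2 * w3"
  define B where "B = sqrt (w3^2 + w4^2) * (w1^2 + w2^2)"
  have B0: "B \<ge> 0" unfolding B_def by simp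
  have "B^2 = (w3^2 + w4^2) * (w1^2 + w2^2)^2"
    unfolding B_def by (simp add: power_mult_distrib)
  moreover have "(w3^2 + w4^2) * (w1^2 + w2^2)^2 - A^2 = (w3*(w2^2-w1^2) + 2*w1*w2*w4)^2"
    unfolding A_def by (simp add: algebra_simps power2_eq_square)
  ultimately have "A^2 \<le> B^2" by (metis diff_ge_0_iff_ge zero_le_power2)
  hence "\<bar>A\<bar> \<le> B" using B0 by (metis abs_le_square_iff abs_of_nonneg)
  thus ?thesis unfolding A_def B_def by linarith
qed

theorem lemma4p1:
  fixes w0 w1 w2 w3 w4 :: real
  shows "psi w0 w1 w2 w3 w4 \<ge> psi w0 (sqrt (w1^2 + w2^2)) 0 0 (sqrt (w3^2 + w4^2))"
proof -
  have k: "3 * sqrt 6 / 2 * (w4 * (w2^2 - w1^2) - 2 * w1 * w2 * w3) \<ge> 3 * sqrt 6 / 2 * (- (sqrt (w3^2 + w4^2) * (w1^2 + w2^2)))"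
    using key by (intro mult_left_mono) auto
  have e1: "(sqrt (w1^2 + w2^2))^2 = w1^2 + w2^2" by simp
  have e2: "(sqrt (w3^2 + w4^2))^2 = w3^2 + w4^2" by simp
  have "psi w0 w1 w2 w3 w4 - psi w0 (sqrt (w1^2 + w2^2)) 0 0 (sqrt (w3^2 + w4^2))
     = 3 * sqrt 6 / 2 * (w4 * (w2^2 - w1^2) - 2 * w1 * w2 * w3) - 3 * sqrt 6 / 2 * (- (sqrt (w3^2 + w4^2) * (w1^2 + w2^2)))"
    unfolding psi_def e1 e2 by (simp add: field_simps)
  thus ?thesis using k by linarith
qed

end
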